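(* Let $k\ge 2$ be an integer. The number $b_0(\mathcal F_k)$ of connected components of the $k$-Farey graph $\mathcal F_k$ is \[ b_0(\mathcal F_k)=\begin{cases} p^{\ell-1}(p+1) & \text{if } k=p^\ell \text{ for a prime } p \text{ and an integer } \ell>0,\\ \infty & \text{otherwise.}\end{cases} \]
   Context: The vertex set $V$ consists of all reduced fractions $p/q$ with $p,q\in\mathbb Z$, $\gcd(p,q)=1$, together with $1/0$; here $p/q$ and $(-p)/(-q)$ denote the same vertex. For vertices define $d(p/q,a/b)=|pb-qa|$ (well defined). The $k$-Farey graph $\mathcal F_k$ has vertex set $V$, with an edge between $p/q$ and $a/b$ exactly when $d(p/q,a/b)=k$. *)

theory Defs
  imports "HOL-Computational_Algebra.Primes"
begin

text \<open>Vertices of the k-Farey graph: reduced fractions p/q, together with 1/0, where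
  p/q and (-p)/(-q) are identified.\<close>
definition farey_vertices :: "(int \<times> int) set" where
  "farey_vertices = {(p, q). coprime p q \<and> (q > 0 \<or> (q = 0 \<and> p = 1))}"

definition farey_dist :: "int \<times> int \<Rightarrow> int \<times> int \<Rightarrow> int" where
  "farey_dist u v = \<bar>fst u * snd v - snd u * fst v\<bar>"

definition farey_edges :: "nat \<Rightarrow> ((int \<times> int) \<times> (int \<times> int)) set" where
  "farey_edges k = {(u, v). u \<in> farey_vertices \<and> v \<in> farey_vertices \<and> farey_dist u v = int k}"

definition farey_components :: "nat \<Rightarrow> (int \<times> int) set set" where
  "farey_components k = farey_vertices // ((farey_edges k)\<^sup>*)"

end

theory Submission
  imports Defs
begin

lemma core_ineq:
  fixes a b c d n :: int
  assumes "n*b < a" "a < (n+1)*b" "\<bar>a*d - b*c\<bar> = 1" "d \<ge> 0"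
    "\<not>(c = n \<and> d = 1)" "\<not>(c = n+1 \<and> d = 1)"
  shows "0 < d \<and> n*d < c \<and> c < (n+1)*d"
proof -
  have "(n+1)*b = n*b + b" by (simp add: algebra_simps)
  then have b0: "b > 0" using assms(1,2) by linarith
  have h1: "a - n*b \<ge> 1" "(n+1)*b - a \<ge> 1" using assms(1,2) by auto
  have d0: "d > 0"
  proof (rule ccontr)
    assume "\<not> d > 0" then have "d = 0" using assms(4) by auto
    then have "\<bar>b*c\<bar> = 1" using assms(3) by simp
    moreover have "b dvd \<bar>b*c\<bar>" by simp
    ultimately have "b dvd 1" by simp
    then have "b = 1" using b0 by simp
    then show False using assms(1,2) by auto
  qed
  have l: "n*d < c"
  proof (rule ccontr)
    assume "\<not> n*d < c"
    then have e: "n*d - c \<ge> 0" by auto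
    have X: "a*d - b*c = d*(a - n*b) + b*(n*d - c)" by (simp add: algebra_simps)
    have p1: "d*(a - n*b) \<ge> d" using mult_left_mono[of 1 _ d] h1 d0 by simp
    have p2: "b*(n*d - c) \<ge> 0" using b0 e by simp
    have "a*d - b*c = 1" using X p1 p2 d0 assms(3) by linarith
    then have "d*(a - n*b) = 1" "b*(n*d - c) = 0" using X p1 p2 d0 by linarith+
    then have "d = 1" "c = n*d" using b0 d0 by (auto simp: zmult_eq_1_iff)
    then show False using assms(5) by simp
  qed
  have r: "c < (n+1)*d"
  proof (rule ccontr)
    assume "\<not> c < (n+1)*d"
    then have e: "c - (n+1)*d \<ge> 0" by auto
    have X: "b*c - a*d = d*((n+1)*b - a) + b*(c - (n+1)*d)" by (simp add: algebra_simps)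
    have p1: "d*((n+1)*b - a) \<ge> d" using mult_left_mono[of 1 _ d] h1 d0 by simp
    have p2: "b*(c - (n+1)*d) \<ge> 0" using b0 e by simp
    have "b*c - a*d = 1" using X p1 p2 d0 assms(3) by linarith
    then have "d*((n+1)*b - a) = 1" "b*(c - (n+1)*d) = 0" using X p1 p2 d0 by linarith+
    then have "d = 1" "c = (n+1)*d" using b0 d0 by (auto simp: zmult_eq_1_iff)
    then show False using assms(6) by simp
  qed
  show ?thesis using d0 l r by auto
qed

definition Tset :: "nat \<Rightarrow> int \<Rightarrow> (int \<times> int) set" where
  "Tset k n = {(a, e). \<exists>b. e = int k * b \<and> n*b < a \<and> a < (n+1)*b}"

lemma T_step:
  fixes n p q :: int
  assumes pn: "p dvd n" and qn: "q dvd (n+1)" and pk: "p dvd int k" and qk: "q dvd int k"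
    and up: "\<not> is_unit p" and uq: "\<not> is_unit q" and k0: "k > 0"
    and E: "(u, v) \<in> farey_edges k" and uT: "u \<in> Tset k n"
  shows "v \<in> Tset k n"
proof -
  obtain a b where u: "u = (a, int k * b)" "n*b < a" "a < (n+1)*b" using uT unfolding Tset_def by auto
  obtain c e where v: "v = (c, e)" by (cases v)
  have uV: "coprime a (int k * b)" using E u unfolding farey_edges_def farey_vertices_def by auto
  have vV: "coprime c e" "e \<ge> 0" using E v unfolding farey_edges_def farey_vertices_def by auto
  have D: "\<bar>a * e - int k * b * c\<bar> = int k" using E u v unfolding farey_edges_def farey_dist_def by auto
  have cak: "coprime a (int k)" using uV by simp
  have "a * e = int k * b * c + int k \<or> a * e = int k * b * c - int k" using D by linarith
  then have "int k dvd a * e" by (metis dvd_add dvd_diff dvd_refl dvd_triv_left mult.assoc)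
  then have "int k dvd e" using cak by (metis coprime_commute coprime_dvd_mult_right_iff mult.commute)
  then obtain d where ed: "e = int k * d" by (auto elim: dvdE)
  have "a * e - int k * b * c = int k * (a*d - b*c)" using ed by (simp add: algebra_simps)
  then have "int k * \<bar>a*d - b*c\<bar> = int k * 1" using D by (simp add: abs_mult)
  then have d1: "\<bar>a*d - b*c\<bar> = 1" using k0 by (subst (asm) mult_left_cancel) auto
  have d0: "d \<ge> 0" using vV(2) ed k0 by (simp add: zero_le_mult_iff)
  have x1: "\<not> (c = n \<and> d = 1)"
  proof
    assume "c = n \<and> d = 1"
    then have "coprime n (int k)" using vV ed by simp
    moreover have "\<not> coprime n (int k)" using not_coprimeI[OF pn pk up] .
    ultimately show False by simp
  qed
  have x2: "\<not> (c = n+1 \<and> d = 1)"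
  proof
    assume "c = n+1 \<and> d = 1"
    then have "coprime (n+1) (int k)" using vV ed by simp
    moreover have "\<not> coprime (n+1) (int k)" using not_coprimeI[OF qn qk uq] .
    ultimately show False by simp
  qed
  have "n*d < c \<and> c < (n+1)*d" using core_ineq[OF u(2) u(3) d1 d0 x1 x2] by auto
  then show ?thesis unfolding Tset_def using v ed by auto
qed

lemma T_closed:
  fixes n p q :: int
  assumes "p dvd n" "q dvd (n+1)" "p dvd int k" "q dvd int k"
    "\<not> is_unit p" "\<not> is_unit q" "k > 0"
    and R: "(u, v) \<in> (farey_edges k)\<^sup>*" and uT: "u \<in> Tset k n"
  shows "v \<in> Tset k n"
  using R uT
proof (induction rule: rtrancl_induct)
  case base then show ?case by simp
next
  case (step y z) then show ?case using T_step[OF assms(1-7)] by blast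
qed

lemma int_squeeze:
  fixes x y K :: int
  assumes "K \<ge> 1" "x*K < y*K + 1" "y*K + 1 < (x+1)*K"
  shows "x = y"
proof -
  have "x \<le> y"
  proof (rule ccontr)
    assume "\<not> x \<le> y" then have "y + 1 \<le> x" by simp
    then have "(y+1)*K \<le> x*K" using assms(1) by (intro mult_right_mono) auto
    then show False using assms by (simp add: algebra_simps)
  qed
  moreover have "y \<le> x"
  proof (rule ccontr)
    assume "\<not> y \<le> x" then have "x + 1 \<le> y" by simp
    then have "(x+1)*K \<le> y*K" using assms(1) by (intro mult_right_mono) auto
    then show False using assms by (simp add: algebra_simps)
  qed
  ultimately show ?thesis by simp
qed

lemma infinite_case:
  fixes p q k :: nat
  assumes k2: "k \<ge> 2" and pp: "prime p" and pq: "prime q" and neq: "p \<noteq> q"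
    and pk: "p dvd k" and qk: "q dvd k"
  shows "infinite (farey_components k)"
proof -
  define K where "K = int k"
  define P where "P = int p"
  define Q where "Q = int q"
  have K2: "K \<ge> 2" using k2 K_def by simp
  have "coprime p q" using primes_coprime[OF pp pq neq] .
  then have cPQ: "coprime P Q" unfolding P_def Q_def by simp
  obtain u v where uv: "u * P + v * Q = gcd P Q" using bezout_int by blast
  then have uv1: "u * P + v * Q = 1" using cPQ by simp
  define n0 where "n0 = v * Q - 1"
  define nj where "nj j = n0 + int j * P * Q" for j :: nat
  have Pn: "P dvd nj j" for j
  proof -
    have "nj j = P * (Q * int j - u)" unfolding nj_def n0_def using uv1 by (simp add: algebra_simps)
    then show ?thesis by simp
  qed
  have Qn: "Q dvd (nj j + 1)" for j
  proof -
    have "nj j + 1 = Q * (v + int j * P)" unfolding nj_def n0_def by (simp add: algebra_simps)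
    then show ?thesis by simp
  qed
  have PK: "P dvd int k" using pk unfolding P_def by simp
  have QK: "Q dvd int k" using qk unfolding Q_def by simp
  have uP: "\<not> is_unit P" using prime_gt_1_nat[OF pp] unfolding P_def by simp
  have uQ: "\<not> is_unit Q" using prime_gt_1_nat[OF pq] unfolding Q_def by simp
  define w where "w j = (nj j * K + 1, K * K)" for j
  define R where "R = (farey_edges k)\<^sup>*"
  define cls where "cls j = R `` {w j}" for j
  have wV: "w j \<in> farey_vertices" for j
  proof -
    have c1: "coprime (nj j * K + 1) K"
    proof (rule coprimeI)
      fix c assume "c dvd nj j * K + 1" "c dvd K"
      then have "c dvd (nj j * K + 1) - nj j * K" by (metis dvd_diff dvd_mult)
      then show "is_unit c" by simp
    qed
    then have "coprime (nj j * K + 1) (K * K)" by simp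
    moreover have "K * K > 0" using K2 by simp
    ultimately show ?thesis unfolding w_def farey_vertices_def by simp
  qed
  have wT: "w j \<in> Tset k (nj j)" for j
  proof -
    have "nj j * K < nj j * K + 1" by simp
    moreover have "nj j * K + 1 < (nj j + 1) * K" using K2 by (simp add: algebra_simps)
    ultimately show ?thesis unfolding Tset_def w_def K_def by auto
  qed
  have clsC: "cls j \<in> farey_components k" for j
    unfolding cls_def farey_components_def R_def using wV by (intro quotientI)
  have inj: "inj cls"
  proof (rule injI)
    fix i j assume "cls i = cls j"
    moreover have "w j \<in> cls j" unfolding cls_def R_def by simp
    ultimately have "(w i, w j) \<in> R" unfolding cls_def by auto
    then have "w j \<in> Tset k (nj i)"
      using T_closed[OF Pn[of i] Qn[of i] PK QK uP uQ _ _ wT[of i]] k2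
      unfolding R_def by simp
    then obtain b where b: "K * K = K * b" "nj i * b < nj j * K + 1" "nj j * K + 1 < (nj i + 1) * b"
      unfolding Tset_def w_def K_def by auto
    have "b = K" using b(1) K2 by simp
    then have "nj i = nj j" using int_squeeze[of K "nj i" "nj j"] b K2 by simp
    then have "int i * (P * Q) = int j * (P * Q)" unfolding nj_def by (simp add: algebra_simps)
    moreover have "P * Q \<noteq> 0" using prime_gt_1_nat[OF pp] prime_gt_1_nat[OF pq] unfolding P_def Q_def by simp
    ultimately show "i = j" by simp
  qed
  have "infinite (range cls)" using inj by (simp add: finite_image_iff)
  moreover have "range cls \<subseteq> farey_components k" using clsC by auto
  ultimately show ?thesis using finite_subset by blast
qed

definition det2 :: "int \<times> int \<Rightarrow> int \<times> int \<Rightarrow> int" where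
  "det2 u v = fst u * snd v - snd u * fst v"

definition nrm :: "int \<times> int \<Rightarrow> int \<times> int" where
  "nrm u = (if snd u > 0 \<or> (snd u = 0 \<and> fst u = 1) then u else (- fst u, - snd u))"

lemma nrm_V:
  assumes "coprime (fst u) (snd u)"
  shows "nrm u \<in> farey_vertices"
proof (cases u)
  case (Pair a b)
  consider "b > 0" | "b = 0" | "b < 0" by linarith
  then show ?thesis
  proof cases
    case 1 then show ?thesis using assms Pair unfolding nrm_def farey_vertices_def by auto
  next
    case 2
    then have "is_unit a" using assms Pair by simp
    then have "a = 1 \<or> a = -1" by auto
    then show ?thesis using 2 Pair unfolding nrm_def farey_vertices_def by auto
  next
    case 3 then show ?thesis using assms Pair unfolding nrm_def farey_vertices_def by auto
  qed
qed

lemma nrm_pm: "nrm u = u \<or> nrm u = (- fst u, - snd u)"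
  unfolding nrm_def by auto

lemma nrm_det: "\<bar>det2 (nrm u) (nrm v)\<bar> = \<bar>det2 u v\<bar>"
  using nrm_pm[of u] nrm_pm[of v] unfolding det2_def
  by (elim disjE) (simp_all add: algebra_simps abs_minus_commute)

lemma nrm_id: "u \<in> farey_vertices \<Longrightarrow> nrm u = u"
  unfolding nrm_def farey_vertices_def by auto

lemma nrm_neg: "u \<in> farey_vertices \<Longrightarrow> nrm (- fst u, - snd u) = u"
  unfolding nrm_def farey_vertices_def by auto

lemma V_coprime: "u \<in> farey_vertices \<Longrightarrow> coprime (fst u) (snd u)"
  unfolding farey_vertices_def by auto

lemma edge_nrm:
  assumes "coprime (fst s) (snd s)" "coprime (fst t) (snd t)" "\<bar>det2 s t\<bar> = int k"
  shows "(nrm s, nrm t) \<in> farey_edges k"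
  using nrm_V[OF assms(1)] nrm_V[OF assms(2)] nrm_det[of s t] assms(3)
  unfolding farey_edges_def farey_dist_def det2_def by auto

lemma trans_dvd_raw:
  fixes a b c d w1 w2 K :: int
  assumes "coprime c d" "K dvd (c*b - d*a)" "K dvd (c*w2 - d*w1)"
  shows "K dvd (a*w2 - b*w1)"
proof -
  obtain x y where xy: "x*c + y*d = gcd c d" using bezout_int by blast
  then have xy1: "x*c + y*d = 1" using assms(1) by simp
  have "a*w2 - b*w1 = (a*w2 - b*w1)*(x*c+y*d)" using xy1 by simp
  also have "\<dots> = (x*a+y*b)*(c*w2 - d*w1) - (x*w1+y*w2)*(c*b - d*a)" by (simp add: algebra_simps)
  finally show ?thesis using assms(2,3) by simp
qed

lemma trans_dvd:
  assumes "coprime (fst v) (snd v)" "K dvd det2 v u" "K dvd det2 v w"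
  shows "K dvd det2 u w"
  using trans_dvd_raw[OF assms(1), of K "snd u" "fst u" "snd w" "fst w"] assms(2,3)
  unfolding det2_def by simp

lemma det2_swap: "det2 v u = - det2 u v"
  unfolding det2_def by simp

lemma R_sub:
  assumes uV: "u \<in> farey_vertices" and R: "(u, v) \<in> (farey_edges k)\<^sup>*"
  shows "v \<in> farey_vertices \<and> int k dvd det2 u v"
  using R
proof (induction rule: rtrancl_induct)
  case base then show ?case using uV by (simp add: det2_def)
next
  case (step y z)
  then have yV: "y \<in> farey_vertices" and zV: "z \<in> farey_vertices"
    and D: "\<bar>det2 y z\<bar> = int k" and uy: "int k dvd det2 u y"
    unfolding farey_edges_def farey_dist_def det2_def by auto
  have "int k dvd det2 y z" using D by (metis abs_dvd_iff dvd_refl)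
  moreover have "int k dvd det2 y u" using uy det2_swap[of y u] by simp
  ultimately have "int k dvd det2 u z" using trans_dvd[OF V_coprime[OF yV]] by blast
  then show ?case using zV by simp
qed

definition Gp :: "int \<Rightarrow> ((int \<times> int) \<times> (int \<times> int)) set" where
  "Gp P = {(s, t). \<not> P dvd fst s \<and> \<not> P dvd fst t \<and> \<bar>det2 s t\<bar> = 1}"

lemma det1_coprime:
  fixes a b c d :: int
  assumes "\<bar>a*d - b*c\<bar> = 1"
  shows "coprime a b" "coprime c d"
proof -
  show "coprime a b"
  proof (rule coprimeI)
    fix e assume "e dvd a" "e dvd b"
    then have "e dvd a*d - b*c" by simp
    then have "e dvd \<bar>a*d - b*c\<bar>" by simp
    then show "is_unit e" using assms by simp
  qed
  show "coprime c d"
  proof (rule coprimeI)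
    fix e assume "e dvd c" "e dvd d"
    then have "e dvd a*d - b*c" by simp
    then have "e dvd \<bar>a*d - b*c\<bar>" by simp
    then show "is_unit e" using assms by simp
  qed
qed

lemma descent_step:
  fixes P \<alpha> \<beta> :: int
  assumes pP: "prime P" and cop: "coprime \<alpha> \<beta>" and nP: "\<not> P dvd \<alpha>" and b2: "\<bar>\<beta>\<bar> \<ge> 2"
  shows "\<exists>\<gamma> \<delta>. \<alpha>*\<delta> - \<beta>*\<gamma> = 1 \<and> \<bar>\<delta>\<bar> < \<bar>\<beta>\<bar> \<and> \<not> P dvd \<gamma>"
proof -
  obtain x y where xy: "x*\<alpha> + y*\<beta> = gcd \<alpha> \<beta>" using bezout_int by blast
  then have xy1: "x*\<alpha> + y*\<beta> = 1" using cop by simp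
  define rm where "rm = x mod \<beta>"
  define m where "m = x div \<beta>"
  have xe: "rm + \<beta> * m = x" unfolding rm_def m_def by (rule mod_mult_div_eq)
  define \<delta>1 where "\<delta>1 = rm"
  define \<gamma>1 where "\<gamma>1 = - y - m*\<alpha>"
  define \<delta>2 where "\<delta>2 = \<delta>1 - \<beta>"
  define \<gamma>2 where "\<gamma>2 = \<gamma>1 - \<alpha>"
  have e1: "\<alpha>*\<delta>1 - \<beta>*\<gamma>1 = 1"
  proof -
    have "\<alpha>*\<delta>1 - \<beta>*\<gamma>1 = \<alpha>*(rm + \<beta> * m) + y*\<beta>"
      unfolding \<delta>1_def \<gamma>1_def by (simp add: algebra_simps)
    also have "\<dots> = \<alpha>*x + y*\<beta>" using xe by simp
    also have "\<dots> = 1" using xy1 by (simp add: algebra_simps)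
    finally show ?thesis .
  qed
  have e2: "\<alpha>*\<delta>2 - \<beta>*\<gamma>2 = 1" using e1 unfolding \<delta>2_def \<gamma>2_def by (simp add: algebra_simps)
  have nz: "\<delta>1 \<noteq> 0"
  proof
    assume "\<delta>1 = 0"
    then have "\<beta> dvd \<alpha>*\<delta>1 - \<beta>*\<gamma>1" by simp
    then have "\<beta> dvd 1" using e1 by simp
    then show False using b2 by simp
  qed
  have bd: "\<bar>\<delta>1\<bar> < \<bar>\<beta>\<bar> \<and> \<bar>\<delta>2\<bar> < \<bar>\<beta>\<bar>"
  proof (cases "\<beta> > 0")
    case True
    then have "0 \<le> \<delta>1" "\<delta>1 < \<beta>" unfolding \<delta>1_def rm_def by simp_all
    then show ?thesis using nz True unfolding \<delta>2_def by auto
  next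
    case False
    then have bn: "\<beta> < 0" using b2 by auto
    then have "\<delta>1 \<le> 0" "\<beta> < \<delta>1" unfolding \<delta>1_def rm_def by simp_all
    then show ?thesis using nz bn unfolding \<delta>2_def by auto
  qed
  show ?thesis
  proof (cases "P dvd \<gamma>1")
    case False then show ?thesis using e1 bd by blast
  next
    case True
    have "\<not> P dvd \<gamma>2"
    proof
      assume "P dvd \<gamma>2"
      then have "P dvd \<gamma>1 - \<gamma>2" using True by simp
      then show False using nP unfolding \<gamma>2_def by simp
    qed
    then show ?thesis using e2 bd by blast
  qed
qed

lemma descent:
  fixes P :: int
  assumes pP: "prime P"
  shows "coprime \<alpha> \<beta> \<Longrightarrow> \<not> P dvd \<alpha> \<Longrightarrow> ((1, 0), (\<alpha>, \<beta>)) \<in> (Gp P)\<^sup>*"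
proof (induction "nat \<bar>\<beta>\<bar>" arbitrary: \<alpha> \<beta> rule: less_induct)
  case less
  have nP1: "\<not> P dvd 1" using pP not_prime_unit by blast
  consider "\<beta> = 0" | "\<bar>\<beta>\<bar> = 1" | "\<bar>\<beta>\<bar> \<ge> 2" by linarith
  then show ?case
  proof cases
    case 1
    then have "is_unit \<alpha>" using less.prems by simp
    then have "\<alpha> = 1 \<or> \<alpha> = -1" by auto
    then show ?thesis
    proof
      assume "\<alpha> = 1" then show ?thesis using 1 by simp
    next
      assume a: "\<alpha> = -1"
      have "((1,0),(1,1)) \<in> Gp P" using nP1 unfolding Gp_def det2_def by simp
      moreover have "((1,1),(\<alpha>,\<beta>)) \<in> Gp P" using nP1 a 1 unfolding Gp_def det2_def by simp
      ultimately show ?thesis by (meson converse_rtrancl_into_rtrancl r_into_rtrancl)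
    qed
  next
    case 2
    have "((1,0),(\<alpha>,\<beta>)) \<in> Gp P" using nP1 2 less.prems unfolding Gp_def det2_def by simp
    then show ?thesis by simp
  next
    case 3
    obtain \<gamma> \<delta> where gd: "\<alpha>*\<delta> - \<beta>*\<gamma> = 1" "\<bar>\<delta>\<bar> < \<bar>\<beta>\<bar>" "\<not> P dvd \<gamma>"
      using descent_step[OF pP less.prems 3] by blast
    have "\<bar>\<alpha>*\<delta> - \<beta>*\<gamma>\<bar> = 1" using gd by simp
    then have cgd: "coprime \<gamma> \<delta>" using det1_coprime(2)[of \<alpha> \<delta> \<beta> \<gamma>] by simp
    have "nat \<bar>\<delta>\<bar> < nat \<bar>\<beta>\<bar>" using gd by simp
    then have IH: "((1,0),(\<gamma>,\<delta>)) \<in> (Gp P)\<^sup>*" using less.hyps cgd gd(3) by blast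
    have "\<bar>\<gamma>*\<beta> - \<delta>*\<alpha>\<bar> = 1" using gd(1) by (simp add: algebra_simps)
    then have "((\<gamma>,\<delta>),(\<alpha>,\<beta>)) \<in> Gp P" using gd(3) less.prems unfolding Gp_def det2_def by simp
    then show ?thesis using IH by simp
  qed
qed

definition phi :: "int \<Rightarrow> int \<Rightarrow> int \<Rightarrow> int \<Rightarrow> int \<Rightarrow> int \<times> int \<Rightarrow> int \<times> int" where
  "phi a b x y K s = (fst s * a + K * snd s * x, fst s * b + K * snd s * y)"

lemma phi_coprime:
  fixes P K a b x y \<alpha> \<beta> :: int
  assumes pP: "prime P" and K: "K = P ^ l" and axy: "a*y - b*x = 1"
    and nP: "\<not> P dvd \<alpha>" and cop: "coprime \<alpha> \<beta>"
  shows "coprime (fst (phi a b x y K (\<alpha>, \<beta>))) (snd (phi a b x y K (\<alpha>, \<beta>)))"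
proof (rule coprimeI)
  fix c
  assume c1: "c dvd fst (phi a b x y K (\<alpha>, \<beta>))" and c2: "c dvd snd (phi a b x y K (\<alpha>, \<beta>))"
  have i1: "y * fst (phi a b x y K (\<alpha>, \<beta>)) - x * snd (phi a b x y K (\<alpha>, \<beta>)) = \<alpha> * (a*y - b*x)"
    unfolding phi_def by (simp add: algebra_simps)
  have i2: "a * snd (phi a b x y K (\<alpha>, \<beta>)) - b * fst (phi a b x y K (\<alpha>, \<beta>)) = K * \<beta> * (a*y - b*x)"
    unfolding phi_def by (simp add: algebra_simps)
  have "c dvd y * fst (phi a b x y K (\<alpha>, \<beta>)) - x * snd (phi a b x y K (\<alpha>, \<beta>))" using c1 c2 by simp
  then have d1: "c dvd \<alpha>" using i1 axy by simp
  have "c dvd a * snd (phi a b x y K (\<alpha>, \<beta>)) - b * fst (phi a b x y K (\<alpha>, \<beta>))" using c1 c2 by simp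
  then have d2: "c dvd K * \<beta>" using i2 axy by simp
  have "coprime P \<alpha>" using prime_imp_coprime[OF pP nP] .
  then have "coprime \<alpha> K" using K by (simp add: coprime_commute)
  then have "coprime \<alpha> (K * \<beta>)" using cop by simp
  then show "is_unit c" using coprime_common_divisor d1 d2 by blast
qed

lemma phi_det:
  "det2 (phi a b x y K s) (phi a b x y K t) = K * det2 s t * (a*y - b*x)"
  unfolding phi_def det2_def by (simp add: algebra_simps)

lemma lift_edge:
  fixes P a b x y :: int
  assumes pP: "prime P" and K: "int k = P ^ l" and axy: "a*y - b*x = 1"
    and st: "(s, t) \<in> Gp P"
  shows "(nrm (phi a b x y (int k) s), nrm (phi a b x y (int k) t)) \<in> farey_edges k"
proof -
  obtain \<alpha> \<beta> where s: "s = (\<alpha>, \<beta>)" by (cases s)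
  obtain \<gamma> \<delta> where t: "t = (\<gamma>, \<delta>)" by (cases t)
  have G: "\<not> P dvd \<alpha>" "\<not> P dvd \<gamma>" "\<bar>\<alpha>*\<delta> - \<beta>*\<gamma>\<bar> = 1"
    using st s t unfolding Gp_def det2_def by auto
  have c1: "coprime \<alpha> \<beta>" "coprime \<gamma> \<delta>" using det1_coprime[OF G(3)] by auto
  have "\<bar>det2 (phi a b x y (int k) s) (phi a b x y (int k) t)\<bar> = int k"
    using phi_det[of a b x y "int k" s t] axy G(3) s t unfolding det2_def by (simp add: abs_mult)
  then show ?thesis
    using edge_nrm phi_coprime[OF pP K axy G(1) c1(1)] phi_coprime[OF pP K axy G(2) c1(2)] s t
    by blast
qed

lemma lift_path:
  fixes P a b x y :: int
  assumes pP: "prime P" and K: "int k = P ^ l" and axy: "a*y - b*x = 1"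
    and st: "(s, t) \<in> (Gp P)\<^sup>*"
  shows "(nrm (phi a b x y (int k) s), nrm (phi a b x y (int k) t)) \<in> (farey_edges k)\<^sup>*"
  using st
proof (induction rule: rtrancl_induct)
  case base then show ?case by simp
next
  case (step y' z) then show ?case using lift_edge[OF pP K axy] by (meson rtrancl_into_rtrancl)
qed

lemma connect:
  fixes p l k :: nat
  assumes pp: "prime p" and l0: "l > 0" and kp: "k = p ^ l"
    and uV: "u \<in> farey_vertices" and vV: "v \<in> farey_vertices"
    and dv: "int k dvd det2 u v"
  shows "(u, v) \<in> (farey_edges k)\<^sup>*"
proof -
  define P where "P = int p"
  have pP: "prime P" using pp unfolding P_def by simp
  have K: "int k = P ^ l" using kp unfolding P_def by simp
  obtain a b where u: "u = (a, b)" by (cases u)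
  obtain c d where v: "v = (c, d)" by (cases v)
  have cab: "coprime a b" and ccd: "coprime c d" using uV vV u v unfolding farey_vertices_def by auto
  obtain x' y' where "x'*a + y'*b = gcd a b" using bezout_int by blast
  then have "x'*a + y'*b = 1" using cab by simp
  then have axy: "a * x' - b * (- y') = 1" by (simp add: algebra_simps)
  define x where "x = - y'"
  define y where "y = x'"
  have axy: "a*y - b*x = 1" using axy unfolding x_def y_def by simp
  obtain \<beta> where bet: "a*d - b*c = int k * \<beta>" using dv u v unfolding det2_def by (auto elim: dvdE)
  define \<alpha> where "\<alpha> = y*c - x*d"
  have ph: "phi a b x y (int k) (\<alpha>, \<beta>) = (c, d)"
  proof -
    have kb: "int k * \<beta> = a*d - b*c" using bet by simp
    have "\<alpha> * a + int k * \<beta> * x = (y*c - x*d) * a + (a*d - b*c) * x" unfolding \<alpha>_def using kb by simp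
    also have "\<dots> = c * (a*y - b*x)" by (simp add: algebra_simps)
    finally have 1: "\<alpha> * a + int k * \<beta> * x = c * (a*y - b*x)" .
    have "\<alpha> * b + int k * \<beta> * y = (y*c - x*d) * b + (a*d - b*c) * y" unfolding \<alpha>_def using kb by simp
    also have "\<dots> = d * (a*y - b*x)" by (simp add: algebra_simps)
    finally have 2: "\<alpha> * b + int k * \<beta> * y = d * (a*y - b*x)" .
    show ?thesis using 1 2 axy unfolding phi_def by simp
  qed
  have ph1: "phi a b x y (int k) (1, 0) = (a, b)" unfolding phi_def by simp
  have cop: "coprime \<alpha> \<beta>"
  proof (rule coprimeI)
    fix e assume "e dvd \<alpha>" "e dvd \<beta>"
    then have "e dvd fst (phi a b x y (int k) (\<alpha>, \<beta>))" "e dvd snd (phi a b x y (int k) (\<alpha>, \<beta>))"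
      unfolding phi_def by simp_all
    then have "e dvd c" "e dvd d" using ph by simp_all
    then show "is_unit e" using ccd coprime_common_divisor by blast
  qed
  have nP: "\<not> P dvd \<alpha>"
  proof
    assume "P dvd \<alpha>"
    moreover have "P dvd int k" using K l0 by (simp add: dvd_power)
    ultimately have "P dvd fst (phi a b x y (int k) (\<alpha>, \<beta>))" "P dvd snd (phi a b x y (int k) (\<alpha>, \<beta>))"
      unfolding phi_def by simp_all
    then have "P dvd c" "P dvd d" using ph by simp_all
    then have "is_unit P" using ccd coprime_common_divisor by blast
    then show False using pP not_prime_unit by blast
  qed
  have "((1, 0), (\<alpha>, \<beta>)) \<in> (Gp P)\<^sup>*" using descent[OF pP cop nP] .
  from lift_path[OF pP K axy this] show ?thesis
    using ph ph1 nrm_id[OF uV] nrm_id[OF vV] u v by simp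
qed

definition RepA :: "nat \<Rightarrow> (int \<times> int) set" where
  "RepA k = (\<lambda>c. (1, c)) ` {0..<int k}"

definition RepB :: "nat \<Rightarrow> nat \<Rightarrow> (int \<times> int) set" where
  "RepB p l = (\<lambda>j. (int p * j, 1)) ` {0..<int (p ^ (l - 1))}"

lemma reps_V: "r \<in> RepA k \<union> RepB p l \<Longrightarrow> r \<in> farey_vertices"
  unfolding RepA_def RepB_def farey_vertices_def by auto

lemma small_dvd_eq:
  fixes K c c' :: int
  assumes "K dvd c' - c" "0 \<le> c" "c < K" "0 \<le> c'" "c' < K"
  shows "c = c'"
proof (rule ccontr)
  assume "c \<noteq> c'"
  then have "\<bar>K\<bar> \<le> \<bar>c' - c\<bar>" using dvd_imp_le_int[of "c' - c" K] assms(1) by simp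
  then show False using assms by simp
qed

lemma reps_exist:
  fixes p l k :: nat
  assumes pp: "prime p" and l0: "l > 0" and kp: "k = p ^ l" and uV: "u \<in> farey_vertices"
  shows "\<exists>r \<in> RepA k \<union> RepB p l. int k dvd det2 u r"
proof -
  define P where "P = int p"
  define K where "K = int k"
  have pP: "prime P" using pp unfolding P_def by simp
  have KP: "K = P ^ l" using kp unfolding P_def K_def by simp
  have K0: "K > 0" using KP pP by (simp add: prime_gt_0_int)
  obtain a b where u: "u = (a, b)" by (cases u)
  have cab: "coprime a b" using uV u unfolding farey_vertices_def by auto
  show ?thesis
  proof (cases "P dvd a")
    case False
    have "coprime P a" using prime_imp_coprime[OF pP False] .
    then have caK: "coprime a K" using KP by (simp add: coprime_commute)
    obtain a' z where "a'*a + z*K = gcd a K" using bezout_int by blast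
    then have az: "a'*a = 1 - z*K" using caK by simp
    define c where "c = (b*a') mod K"
    define m where "m = (b*a') div K"
    have ce: "c + K*m = b*a'" unfolding c_def m_def by (rule mod_mult_div_eq)
    have c_eq: "c = b*a' - K*m" using ce by linarith
    have "a*c - b = a*(b*a' - K*m) - b" by (simp add: c_eq)
    also have "\<dots> = b*(a'*a) - a*K*m - b" by (simp add: algebra_simps)
    also have "\<dots> = b*(1 - z*K) - a*K*m - b" using az by simp
    also have "\<dots> = K*(-(b*z) - a*m)" by (simp add: algebra_simps)
    finally have "K dvd det2 u (1, c)" unfolding det2_def u by simp
    moreover have "(1, c) \<in> RepA k" unfolding RepA_def c_def using K0 K_def by auto
    ultimately show ?thesis using K_def by blast
  next
    case True
    then obtain a1 where a1: "a = P * a1" by (auto elim: dvdE)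
    have nb: "\<not> P dvd b"
    proof
      assume "P dvd b"
      then have "is_unit P" using True cab coprime_common_divisor by blast
      then show False using pP not_prime_unit by blast
    qed
    have "coprime P b" using prime_imp_coprime[OF pP nb] .
    then have cbK: "coprime b K" using KP by (simp add: coprime_commute)
    obtain b' z where "b'*b + z*K = gcd b K" using bezout_int by blast
    then have bz: "b'*b = 1 - z*K" using cbK by simp
    define M where "M = P ^ (l - 1)"
    have KM: "K = P * M" unfolding M_def KP using l0 by (simp add: power_eq_if)
    have M0: "M > 0" unfolding M_def using pP by (simp add: prime_gt_0_int)
    define j where "j = (a1*b') mod M"
    define m where "m = (a1*b') div M"
    have je: "j + M*m = a1*b'" unfolding j_def m_def by (rule mod_mult_div_eq)
    have j_eq: "j = a1*b' - M*m" using je by linarith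
    have "a*1 - b*(P*j) = P*a1 - b*P*(a1*b' - M*m)" by (simp add: j_eq a1 algebra_simps)
    also have "\<dots> = P*a1*(1 - b'*b) + b*(P*M)*m" by (simp add: algebra_simps)
    also have "\<dots> = P*a1*(z*K) + b*K*m" using bz KM by simp
    also have "\<dots> = K*(P*a1*z + b*m)" by (simp add: algebra_simps)
    finally have "K dvd det2 u (P*j, 1)" unfolding det2_def u by simp
    moreover have "(P*j, 1) \<in> RepB p l" unfolding RepB_def P_def
    proof
      show "j \<in> {0..<int (p ^ (l - 1))}" using M0 unfolding j_def M_def P_def by simp
    qed simp
    ultimately show ?thesis using K_def by blast
  qed
qed

lemma reps_distinct:
  fixes p l k :: nat
  assumes pp: "prime p" and l0: "l > 0" and kp: "k = p ^ l"
    and r: "r \<in> RepA k \<union> RepB p l" and r': "r' \<in> RepA k \<union> RepB p l"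
    and dv: "int k dvd det2 r r'"
  shows "r = r'"
proof -
  define P where "P = int p"
  define K where "K = int k"
  define M where "M = P ^ (l - 1)"
  have pP: "prime P" using pp unfolding P_def by simp
  have KP: "K = P ^ l" using kp unfolding P_def K_def by simp
  have KM: "K = P * M" unfolding M_def KP using l0 by (simp add: power_eq_if)
  have P0: "P \<noteq> 0" using pP by simp
  have PK: "P dvd K" using KM by simp
  have nP1: "\<not> P dvd 1" using pP not_prime_unit by blast
  have dv': "K dvd det2 r r'" using dv K_def by simp
  have MB: "int (p ^ (l - 1)) = M" unfolding M_def P_def by simp
  have formA: "\<exists>c. x = (1,c) \<and> 0 \<le> c \<and> c < K" if "x \<in> RepA k" for x
    using that unfolding RepA_def K_def by auto
  have formB: "\<exists>j. x = (P*j,1) \<and> 0 \<le> j \<and> j < M" if "x \<in> RepB p l" for x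
    using that unfolding RepB_def P_def MB[symmetric] by auto
  consider (AA) c c' where "r = (1, c)" "r' = (1, c')" "0 \<le> c" "c < K" "0 \<le> c'" "c' < K"
    | (AB) c j where "r = (1, c)" "r' = (P*j, 1)"
    | (BA) c j where "r = (P*j, 1)" "r' = (1, c)"
    | (BB) j j' where "r = (P*j, 1)" "r' = (P*j', 1)" "0 \<le> j" "j < M" "0 \<le> j'" "j' < M"
  proof -
    from r r' consider "r \<in> RepA k" "r' \<in> RepA k" | "r \<in> RepA k" "r' \<in> RepB p l"
      | "r \<in> RepB p l" "r' \<in> RepA k" | "r \<in> RepB p l" "r' \<in> RepB p l" by blast
    then show thesis
    proof cases
      case 1 then show thesis using formA that(1) by metis
    next
      case 2 then show thesis using formA formB that(2) by metis
    next
      case 3 then show thesis using formA formB that(3) by metis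
    next
      case 4 then show thesis using formB that(4) by metis
    qed
  qed
  then show ?thesis
  proof cases
    case AA
    then have "K dvd c' - c" using dv' unfolding det2_def by simp
    then show ?thesis using AA small_dvd_eq by simp
  next
    case AB
    then have "K dvd 1 - c*(P*j)" using dv' unfolding det2_def by simp
    then have "P dvd 1 - c*(P*j)" using PK dvd_trans by blast
    moreover have "P dvd c*j*P" by simp
    ultimately have "P dvd (1 - c*(P*j)) + c*j*P" by (rule dvd_add)
    moreover have "(1 - c*(P*j)) + c*j*P = 1" by (simp add: algebra_simps)
    ultimately show ?thesis using nP1 by simp
  next
    case BA
    then have "K dvd P*j*c - 1" using dv' unfolding det2_def by simp
    then have "P dvd P*j*c - 1" using PK dvd_trans by blast
    moreover have "P dvd P*j*c" by simp
    ultimately have "P dvd P*j*c - (P*j*c - 1)" by (metis dvd_diff)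
    then show ?thesis using nP1 by simp
  next
    case BB
    then have "P * M dvd P * (j - j')" using dv' KM unfolding det2_def by (simp add: algebra_simps)
    then have "M dvd j' - j" using P0 by (simp add: dvd_diff_commute)
    then show ?thesis using BB small_dvd_eq[of M j' j] by simp
  qed
qed

lemma prime_power_case:
  fixes p l k :: nat
  assumes pp: "prime p" and l0: "l > 0" and kp: "k = p ^ l"
  shows "finite (farey_components k) \<and> card (farey_components k) = p ^ (l - 1) * (p + 1)"
proof -
  define R where "R = (farey_edges k)\<^sup>*"
  define Reps where "Reps = RepA k \<union> RepB p l"
  have cls: "R `` {u} = {v \<in> farey_vertices. int k dvd det2 u v}" if uV: "u \<in> farey_vertices" for u
  proof
    show "R `` {u} \<subseteq> {v \<in> farey_vertices. int k dvd det2 u v}"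
      using R_sub[OF uV] unfolding R_def by blast
    show "{v \<in> farey_vertices. int k dvd det2 u v} \<subseteq> R `` {u}"
      using connect[OF pp l0 kp uV] unfolding R_def by blast
  qed
  have same: "R `` {u} = R `` {r}" if uV: "u \<in> farey_vertices" and rV: "r \<in> farey_vertices"
    and d: "int k dvd det2 u r" for u r
  proof -
    have d': "int k dvd det2 r u" using d det2_swap[of r u] by simp
    have "int k dvd det2 u v \<longleftrightarrow> int k dvd det2 r v" for v
      using trans_dvd[OF V_coprime[OF uV] d, of v] trans_dvd[OF V_coprime[OF rV] d', of v] by blast
    then show ?thesis using cls[OF uV] cls[OF rV] by auto
  qed
  have eq: "farey_components k = (\<lambda>r. R `` {r}) ` Reps"
  proof
    show "farey_components k \<subseteq> (\<lambda>r. R `` {r}) ` Reps"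
    proof
      fix X assume "X \<in> farey_components k"
      then obtain u where uV: "u \<in> farey_vertices" and X: "X = R `` {u}"
        unfolding farey_components_def R_def by (auto elim: quotientE)
      obtain r where r: "r \<in> Reps" "int k dvd det2 u r" using reps_exist[OF pp l0 kp uV] Reps_def by blast
      have "X = R `` {r}" using same[OF uV reps_V[of r k p l] r(2)] r(1) X Reps_def by simp
      then show "X \<in> (\<lambda>r. R `` {r}) ` Reps" using r(1) by blast
    qed
    show "(\<lambda>r. R `` {r}) ` Reps \<subseteq> farey_components k"
    proof
      fix X assume "X \<in> (\<lambda>r. R `` {r}) ` Reps"
      then obtain r where r: "r \<in> Reps" "X = R `` {r}" by blast
      have "r \<in> farey_vertices" using reps_V r(1) Reps_def by blast
      then have "R `` {r} \<in> farey_vertices // R" by (rule quotientI)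
      then show "X \<in> farey_components k" unfolding farey_components_def using r(2) R_def by simp
    qed
  qed
  have inj: "inj_on (\<lambda>r. R `` {r}) Reps"
  proof (rule inj_onI)
    fix r r' assume r: "r \<in> Reps" and r': "r' \<in> Reps" and e: "R `` {r} = R `` {r'}"
    have "r' \<in> R `` {r'}" unfolding R_def by simp
    then have "(r, r') \<in> R" using e by auto
    then have "int k dvd det2 r r'" using R_sub[OF reps_V[of r k p l]] r Reps_def R_def by blast
    then show "r = r'" using reps_distinct[OF pp l0 kp] r r' Reps_def by blast
  qed
  have p1: "p > 1" using pp prime_gt_1_nat by blast
  have cA: "card (RepA k) = k" unfolding RepA_def by (subst card_image) (auto simp: inj_on_def)
  have cB: "card (RepB p l) = p ^ (l - 1)" unfolding RepB_def using p1
    by (subst card_image) (auto simp: inj_on_def nat_power_eq)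
  have disj: "RepA k \<inter> RepB p l = {}"
  proof (rule ccontr)
    assume "RepA k \<inter> RepB p l \<noteq> {}"
    then obtain c j where "(1::int, c) = (int p * j, 1)" unfolding RepA_def RepB_def by auto
    then have "int p * j = 1" by simp
    then have "int p = 1 \<or> int p = -1" by (simp add: zmult_eq_1_iff) 
    then show False using p1 by auto
  qed
  have fA: "finite (RepA k)" "finite (RepB p l)" unfolding RepA_def RepB_def by auto
  have cR: "card Reps = k + p ^ (l - 1)" unfolding Reps_def using card_Un_disjoint[OF fA disj] cA cB by simp
  have "k = p ^ (l - 1) * p" using l0 kp by (cases l) auto
  then have ar: "k + p ^ (l - 1) = p ^ (l - 1) * (p + 1)" by (simp add: algebra_simps)
  have "finite Reps" using fA Reps_def by simp
  then show ?thesis using eq card_image[OF inj] cR ar by simp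
qed

lemma two_primes:
  fixes k :: nat
  assumes k2: "k \<ge> 2" and np: "\<nexists>p l. prime p \<and> l > 0 \<and> k = p ^ l"
  shows "\<exists>p q. prime p \<and> prime q \<and> p \<noteq> q \<and> p dvd k \<and> q dvd k"
proof -
  obtain p where pp: "prime p" "p dvd k" using prime_factor_nat[of k] k2 by auto
  have k0: "k > 0" using k2 by simp
  obtain j n where jn: "\<not> p dvd n" "k = n * p ^ j" using prime_power_canonical[OF pp(1) k0] by blast
  have n1: "n \<noteq> 1"
  proof
    assume "n = 1"
    then have kj: "k = p ^ j" using jn by simp
    have "j > 0"
    proof (rule ccontr)
      assume "\<not> j > 0"
      then have "j = 0" by simp
      then have "k = 1" using kj by simp
      then show False using k2 by simp
    qed
    then show False using np pp kj by blast
  qed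
  obtain q where qq: "prime q" "q dvd n" using prime_factor_nat[OF n1] by auto
  have "q \<noteq> p"
  proof
    assume "q = p"
    then have "p dvd n" using qq by simp
    then show False using jn(1) by simp
  qed
  moreover have "q dvd k"
  proof -
    have "q dvd n * p ^ j" using qq(2) by (rule dvd_mult2)
    then show ?thesis using jn(2) by simp
  qed
  ultimately show ?thesis using pp qq by blast
qed

theorem theorem1p1:
  fixes k :: nat
  assumes "k \<ge> 2"
  shows "(\<forall>p l. prime p \<and> l > 0 \<and> k = p ^ l \<longrightarrow>
            finite (farey_components k) \<and> card (farey_components k) = p ^ (l - 1) * (p + 1))
       \<and> ((\<nexists>p l. prime (p::nat) \<and> l > 0 \<and> k = p ^ l) \<longrightarrow> infinite (farey_components k))"
proof (rule conjI)
  show "\<forall>p l. prime p \<and> l > 0 \<and> k = p ^ l \<longrightarrow>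
            finite (farey_components k) \<and> card (farey_components k) = p ^ (l - 1) * (p + 1)"
  proof (intro allI impI)
    fix p l :: nat assume h: "prime p \<and> l > 0 \<and> k = p ^ l"
    show "finite (farey_components k) \<and> card (farey_components k) = p ^ (l - 1) * (p + 1)"
      using prime_power_case[of p l k] h by simp
  qed
next
  show "(\<nexists>p l. prime (p::nat) \<and> l > 0 \<and> k = p ^ l) \<longrightarrow> infinite (farey_components k)"
  proof
    assume "\<nexists>p l. prime (p::nat) \<and> l > 0 \<and> k = p ^ l"
    then obtain p q where h: "prime p" "prime q" "p \<noteq> q" "p dvd k" "q dvd k"
      using two_primes[OF assms] by blast
    show "infinite (farey_components k)" using infinite_case[OF assms h] .
  qed
qed

end
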